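(* Let $\vec p=(p_1,\dots,p_m)$ be independent p-values, where the true null p-values are $U[0,1]$ and each alternative (non-null) p-value has the same marginal probability density function $f$ on $[0,1]$, which is monotonically non-increasing and differentiable. Let $B^{(1)},B^{(2)}$ be two threshold FDR procedures, $B^{(i)}$ rejecting $R^{(i)}(\vec p)$ hypotheses and having false discovery rate $FDR^{(i)}$, $i=1,2$. Assume that $R^{(1)}(\vec p)\le R^{(2)}(\vec p)$ for all $\vec p$. Then $FDR^{(1)}\le FDR^{(2)}$.
   Context: A threshold FDR procedure computes a number $R(\vec p)\in\{0,\dots,m\}$ that depends only on the sorted p-values $p_{(1)}\le\dots\le p_{(m)}$, and rejects the hypotheses with the $R$ smallest p-values. For such a procedure, $V$ denotes the number of rejected true null hypotheses, $R^+=\max(R,1)$, and $FDR=E[V/R^+]$ (with $V/R^+=0$ when $R=0$). *)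

theory Defs
  imports "HOL-Probability.Probability"
begin

definition sorted_pvals :: "nat \<Rightarrow> (nat \<Rightarrow> real) \<Rightarrow> real list" where
  "sorted_pvals m p = sort (map p [0..<m])"

definition threshold_procedure :: "nat \<Rightarrow> ((nat \<Rightarrow> real) \<Rightarrow> nat) \<Rightarrow> bool" where
  "threshold_procedure m R \<longleftrightarrow>
     (\<forall>p. R p \<le> m) \<and>
     (\<forall>p q. sorted_pvals m p = sorted_pvals m q \<longrightarrow> R p = R q)"

text \<open>Hypotheses rejected: those with the R smallest p-values, i.e. p_i <= p_(R).\<close>
definition rejected :: "nat \<Rightarrow> ((nat \<Rightarrow> real) \<Rightarrow> nat) \<Rightarrow> (nat \<Rightarrow> real) \<Rightarrow> nat set" where
  "rejected m R p = {i. i < m \<and> 0 < R p \<and> p i \<le> sorted_pvals m p ! (R p - 1)}"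

text \<open>V = number of rejected true nulls (N = set of true null indices).\<close>
definition num_false_rej :: "nat \<Rightarrow> nat set \<Rightarrow> ((nat \<Rightarrow> real) \<Rightarrow> nat) \<Rightarrow> (nat \<Rightarrow> real) \<Rightarrow> nat" where
  "num_false_rej m N R p = card (rejected m R p \<inter> N)"

definition FDP :: "nat \<Rightarrow> nat set \<Rightarrow> ((nat \<Rightarrow> real) \<Rightarrow> nat) \<Rightarrow> (nat \<Rightarrow> real) \<Rightarrow> real" where
  "FDP m N R p = real (num_false_rej m N R p) / real (max (R p) 1)"

definition pval_law :: "nat set \<Rightarrow> (real \<Rightarrow> real) \<Rightarrow> nat \<Rightarrow> real measure" where
  "pval_law N f i =
     (if i \<in> N then density lborel (\<lambda>x. indicator {0..1} x)
      else density lborel (\<lambda>x. ennreal (f x) * indicator {0..1} x))"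

definition pvals_law :: "nat \<Rightarrow> nat set \<Rightarrow> (real \<Rightarrow> real) \<Rightarrow> (nat \<Rightarrow> real) measure" where
  "pvals_law m N f = (\<Pi>\<^sub>M i\<in>{..<m}. pval_law N f i)"

definition FDR :: "nat \<Rightarrow> nat set \<Rightarrow> (real \<Rightarrow> real) \<Rightarrow> ((nat \<Rightarrow> real) \<Rightarrow> nat) \<Rightarrow> real" where
  "FDR m N f R = (\<integral>p. FDP m N R p \<partial>pvals_law m N f)"

end

theory Submission
  imports Defs "HOL-Combinatorics.Permutations"
begin


lemma qk_mono_step:
  fixes g :: "nat \<Rightarrow> real" and N :: "nat set"
  assumes N: "N \<subseteq> {..<m}" and gnn: "\<forall>k<m. 0 \<le> g k"
    and gmono: "\<forall>k l. k \<le> l \<longrightarrow> l < m \<longrightarrow> g l \<le> g k"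
    and k: "Suc k < m"
  shows "(\<Sum>\<tau>\<in>{\<tau>. \<tau> permutes {..<m}}. if \<exists>i\<in>N. \<tau> i = k then (\<Prod>i\<in>{..<m}-N. g (\<tau> i)) else 0)
       \<le> (\<Sum>\<tau>\<in>{\<tau>. \<tau> permutes {..<m}}. if \<exists>i\<in>N. \<tau> i = Suc k then (\<Prod>i\<in>{..<m}-N. g (\<tau> i)) else 0)"
proof -
  let ?t = "Transposition.transpose k (Suc k)"
  have tp: "?t permutes {..<m}" using k by (intro permutes_swap_id) auto
  have "(\<Sum>\<tau>\<in>{\<tau>. \<tau> permutes {..<m}}. if \<exists>i\<in>N. \<tau> i = Suc k then (\<Prod>i\<in>{..<m}-N. g (\<tau> i)) else 0)
     = (\<Sum>\<tau>\<in>{\<tau>. \<tau> permutes {..<m}}. if \<exists>i\<in>N. (?t \<circ> \<tau>) i = Suc k then (\<Prod>i\<in>{..<m}-N. g ((?t \<circ> \<tau>) i)) else 0)"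
    by (rule setum_permutations_compose_left[OF tp])
  also have "\<dots> = (\<Sum>\<tau>\<in>{\<tau>. \<tau> permutes {..<m}}. if \<exists>i\<in>N. \<tau> i = k then (\<Prod>i\<in>{..<m}-N. g (?t (\<tau> i))) else 0)"
  proof (rule sum.cong[OF refl])
    fix \<tau> :: "nat \<Rightarrow> nat"
    have "(?t (\<tau> i) = Suc k) = (\<tau> i = k)" for i
      by (auto simp: Transposition.transpose_def)
    then show "(if \<exists>i\<in>N. (?t \<circ> \<tau>) i = Suc k then (\<Prod>i\<in>{..<m}-N. g ((?t \<circ> \<tau>) i)) else 0) =
         (if \<exists>i\<in>N. \<tau> i = k then (\<Prod>i\<in>{..<m}-N. g (?t (\<tau> i))) else 0)" by simp
  qed
  finally have eq: "(\<Sum>\<tau>\<in>{\<tau>. \<tau> permutes {..<m}}. if \<exists>i\<in>N. \<tau> i = Suc k then (\<Prod>i\<in>{..<m}-N. g (\<tau> i)) else 0)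
     = (\<Sum>\<tau>\<in>{\<tau>. \<tau> permutes {..<m}}. if \<exists>i\<in>N. \<tau> i = k then (\<Prod>i\<in>{..<m}-N. g (?t (\<tau> i))) else 0)" .
  show ?thesis unfolding eq
  proof (rule sum_mono)
    fix \<tau> assume "\<tau> \<in> {\<tau>. \<tau> permutes {..<m}}"
    hence tau: "\<tau> permutes {..<m}" by simp
    show "(if \<exists>i\<in>N. \<tau> i = k then (\<Prod>i\<in>{..<m}-N. g (\<tau> i)) else 0)
        \<le> (if \<exists>i\<in>N. \<tau> i = k then (\<Prod>i\<in>{..<m}-N. g (?t (\<tau> i))) else 0)"
    proof (cases "\<exists>i\<in>N. \<tau> i = k")
      case True
      then obtain i0 where i0: "i0 \<in> N" "\<tau> i0 = k" by blast
      have "(\<Prod>i\<in>{..<m}-N. g (\<tau> i)) \<le> (\<Prod>i\<in>{..<m}-N. g (?t (\<tau> i)))"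
      proof (rule prod_mono, rule conjI)
        fix i assume i: "i \<in> {..<m}-N"
        have ti: "\<tau> i < m" using permutes_in_image[OF tau] i by auto
        show "0 \<le> g (\<tau> i)" using gnn ti by auto
        have "\<tau> i \<noteq> k"
        proof
          assume "\<tau> i = k"
          hence "\<tau> i = \<tau> i0" using i0 by simp
          hence "i = i0" using permutes_inj[OF tau] by (auto dest: injD)
          thus False using i i0 by auto
        qed
        then show "g (\<tau> i) \<le> g (?t (\<tau> i))"
          using gmono k by (cases "\<tau> i = Suc k") (auto simp: Transposition.transpose_def)
      qed
      with True show ?thesis by simp
    qed simp
  qed
qed


lemma card_lt_sum:
  fixes \<tau> :: "nat \<Rightarrow> nat"
  assumes "inj \<tau>" "finite N"
  shows "real (card {i\<in>N. \<tau> i < r}) = (\<Sum>k<r. if \<exists>i\<in>N. \<tau> i = k then 1 else 0)"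
proof -
  have "card {i\<in>N. \<tau> i < r} = card (\<tau> ` {i\<in>N. \<tau> i < r})"
    using assms by (intro card_image[symmetric]) (auto intro: inj_on_subset)
  also have "\<tau> ` {i\<in>N. \<tau> i < r} = {k\<in>{..<r}. \<exists>i\<in>N. \<tau> i = k}" by auto
  finally show ?thesis by (simp add: sum.If_cases Int_def)
qed

lemma perm_avg_mono:
  fixes g :: "nat \<Rightarrow> real" and N :: "nat set"
  assumes N: "N \<subseteq> {..<m}" and gnn: "\<forall>k<m. 0 \<le> g k"
    and gmono: "\<forall>k l. k \<le> l \<longrightarrow> l < m \<longrightarrow> g l \<le> g k"
    and r: "1 \<le> r" "r \<le> r'" "r' \<le> m"
  shows "(\<Sum>\<tau>\<in>{\<tau>. \<tau> permutes {..<m}}. real (card {i\<in>N. \<tau> i < r}) * (\<Prod>i\<in>{..<m}-N. g (\<tau> i))) / r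
       \<le> (\<Sum>\<tau>\<in>{\<tau>. \<tau> permutes {..<m}}. real (card {i\<in>N. \<tau> i < r'}) * (\<Prod>i\<in>{..<m}-N. g (\<tau> i))) / r'"
proof -
  define q where "q k = (\<Sum>\<tau>\<in>{\<tau>. \<tau> permutes {..<m}}. if \<exists>i\<in>N. \<tau> i = k then (\<Prod>i\<in>{..<m}-N. g (\<tau> i)) else 0)" for k
  define Q where "Q r = (\<Sum>\<tau>\<in>{\<tau>. \<tau> permutes {..<m}}. real (card {i\<in>N. \<tau> i < r}) * (\<Prod>i\<in>{..<m}-N. g (\<tau> i)))" for r
  have finN: "finite N" using N finite_subset by blast
  have Qq: "Q r = (\<Sum>k<r. q k)" for r
  proof -
    have "Q r = (\<Sum>\<tau>\<in>{\<tau>. \<tau> permutes {..<m}}. \<Sum>k<r. if \<exists>i\<in>N. \<tau> i = k then (\<Prod>i\<in>{..<m}-N. g (\<tau> i)) else 0)"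
      unfolding Q_def
    proof (rule sum.cong[OF refl])
      fix \<tau> assume "\<tau> \<in> {\<tau>. \<tau> permutes {..<m}}"
      hence "inj \<tau>" by (auto intro: permutes_inj)
      thus "real (card {i\<in>N. \<tau> i < r}) * (\<Prod>i\<in>{..<m}-N. g (\<tau> i)) =
         (\<Sum>k<r. if \<exists>i\<in>N. \<tau> i = k then (\<Prod>i\<in>{..<m}-N. g (\<tau> i)) else 0)"
        by (auto simp add: card_lt_sum[OF _ finN] sum_distrib_right intro!: sum.cong)
    qed
    also have "\<dots> = (\<Sum>k<r. q k)" unfolding q_def by (rule sum.swap)
    finally show ?thesis .
  qed
  have qmono: "q k \<le> q l" if "k \<le> l" "l < m" for k l
    using that
  proof (induction l rule: dec_induct)
    case base then show ?case by simp
  next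
    case (step l)
    have "q l \<le> q (Suc l)" unfolding q_def
      by (rule qk_mono_step[OF N gnn gmono step(4)])
    with step show ?case by simp
  qed
  have stepQ: "Q s / s \<le> Q (Suc s) / Suc s" if "1 \<le> s" "Suc s \<le> m" for s
  proof -
    have "Q s \<le> s * q s"
    proof -
      have "Q s = (\<Sum>k<s. q k)" by (rule Qq)
      also have "\<dots> \<le> (\<Sum>k<s. q s)" by (rule sum_mono) (use qmono that in auto)
      finally show ?thesis by simp
    qed
    moreover have "Q (Suc s) = Q s + q s" by (simp add: Qq)
    ultimately show ?thesis using that by (simp add: field_simps)
  qed
  have "Q r / r \<le> Q r' / r'" using r(2,3)
  proof (induction r' rule: dec_induct)
    case base then show ?case by simp
  next
    case (step l)
    have "Q l / l \<le> Q (Suc l) / Suc l" using stepQ[of l] step r by simp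
    with step show ?case by simp
  qed
  thus ?thesis unfolding Q_def .
qed



lemma sorted_nth_le_iff:
  fixes xs :: "real list"
  assumes s: "sorted xs" and k: "k < length xs"
  shows "(y \<le> xs ! k) = (card {j. j < length xs \<and> xs ! j < y} \<le> k)"
proof
  assume "y \<le> xs ! k"
  have "{j. j < length xs \<and> xs ! j < y} \<subseteq> {..<k}"
  proof (intro subsetI, simp, rule ccontr)
    fix j assume j: "j < length xs \<and> xs ! j < y" "\<not> j < k"
    hence "xs ! k \<le> xs ! j" using sorted_nth_mono[OF s, of k j] by simp
    thus False using j \<open>y \<le> xs ! k\<close> by simp
  qed
  thus "card {j. j < length xs \<and> xs ! j < y} \<le> k"
    by (metis card_lessThan card_mono finite_lessThan)
next
  assume c: "card {j. j < length xs \<and> xs ! j < y} \<le> k"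
  show "y \<le> xs ! k"
  proof (rule ccontr)
    assume "\<not> y \<le> xs ! k"
    have "{..k} \<subseteq> {j. j < length xs \<and> xs ! j < y}"
    proof (intro subsetI, simp)
      fix j assume j: "j \<le> k"
      hence "xs ! j \<le> xs ! k" using sorted_nth_mono[OF s, of j k] k by simp
      thus "j < length xs \<and> xs ! j < y" using j k \<open>\<not> y \<le> xs ! k\<close> by simp
    qed
    hence "card {..k} \<le> card {j. j < length xs \<and> xs ! j < y}"
      by (intro card_mono) auto
    thus False using c by simp
  qed
qed

lemma length_filter_sort: "length (filter P (sort xs)) = length (filter P xs)"
proof -
  have "length (filter P (sort xs)) = size (mset (filter P (sort xs)))" by (simp only: size_mset)
  also have "\<dots> = size (filter_mset P (mset (sort xs)))" by (simp only: mset_filter)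
  also have "\<dots> = size (filter_mset P (mset xs))" by (simp only: mset_sort)
  also have "\<dots> = size (mset (filter P xs))" by (simp only: mset_filter)
  also have "\<dots> = length (filter P xs)" by (simp only: size_mset)
  finally show ?thesis .
qed

lemma length_filter_map_upt:
  "length (filter P (map p [0..<m])) = card {j. j < m \<and> P (p j)}"
  by (simp add: length_filter_conv_card) (rule arg_cong[where f=card], auto)

lemma rej_char:
  fixes p :: "nat \<Rightarrow> real"
  assumes "1 \<le> r" "r \<le> m"
  shows "(y \<le> sorted_pvals m p ! (r - 1)) = (card {j. j < m \<and> p j < y} < r)"
proof -
  let ?xs = "sorted_pvals m p"
  have len: "length ?xs = m" by (simp add: sorted_pvals_def)
  have "(y \<le> ?xs ! (r - 1)) = (card {j. j < length ?xs \<and> ?xs ! j < y} \<le> r - 1)"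
    by (rule sorted_nth_le_iff) (use assms len in \<open>auto simp: sorted_pvals_def\<close>)
  also have "card {j. j < length ?xs \<and> ?xs ! j < y} = length (filter (\<lambda>x. x < y) ?xs)"
    by (simp add: length_filter_conv_card)
  also have "\<dots> = card {j. j < m \<and> p j < y}"
    unfolding sorted_pvals_def length_filter_sort length_filter_map_upt ..
  finally show ?thesis using assms by linarith
qed

lemma sorted_pvals_perm:
  assumes "\<sigma> permutes {..<m}"
  shows "sorted_pvals m (p \<circ> \<sigma>) = sorted_pvals m p"
proof -
  have "mset (map \<sigma> [0..<m]) = image_mset \<sigma> (mset_set {..<m})"
    by (simp add: atLeast0LessThan[symmetric] mset_set_upto_eq_mset_upto) 
  also have "\<dots> = mset_set (\<sigma> ` {..<m})"
    using permutes_inj_on[OF assms] by (simp add: image_mset_mset_set)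
  also have "\<sigma> ` {..<m} = {..<m}" using permutes_image[OF assms] .
  finally have "mset (map \<sigma> [0..<m]) = mset [0..<m]"
    by (simp add: atLeast0LessThan[symmetric] mset_set_upto_eq_mset_upto) 
  hence "mset (map (p \<circ> \<sigma>) [0..<m]) = mset (map p [0..<m])"
    by (metis map_map mset_map)
  hence "sort (map (p \<circ> \<sigma>) [0..<m]) = sort (map p [0..<m])"
    by (intro properties_for_sort) simp_all
  thus ?thesis unfolding sorted_pvals_def .
qed



definition cntlt :: "nat \<Rightarrow> (nat \<Rightarrow> real) \<Rightarrow> nat \<Rightarrow> nat" where
  "cntlt m q i = card {j. j < m \<and> q j < q i}"

lemma cntlt_lt: "i < m \<Longrightarrow> cntlt m q i < m"
proof -
  assume i: "i < m"
  have "{j. j < m \<and> q j < q i} \<subseteq> {..<m} - {i}" by auto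
  hence "cntlt m q i \<le> card ({..<m} - {i})" unfolding cntlt_def by (intro card_mono) auto
  thus ?thesis using i by simp
qed

lemma cntlt_strict:
  assumes "i < m" "q i < q j"
  shows "cntlt m q i < cntlt m q j"
proof -
  have "{k. k < m \<and> q k < q i} \<subset> {k. k < m \<and> q k < q j}"
    using assms by auto
  thus ?thesis unfolding cntlt_def by (intro psubset_card_mono) auto
qed

lemma cntlt_perm:
  assumes "\<sigma> permutes {..<m}" "i < m"
  shows "cntlt m (q \<circ> \<sigma>) i = cntlt m q (\<sigma> i)"
proof -
  have "{j. j < m \<and> q (\<sigma> j) < q (\<sigma> i)} = {j \<in> {..<m}. q (\<sigma> j) < q (\<sigma> i)}" by auto
  hence "card {j. j < m \<and> q (\<sigma> j) < q (\<sigma> i)} = card (\<sigma> ` {j \<in> {..<m}. q (\<sigma> j) < q (\<sigma> i)})"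
    using permutes_inj_on[OF assms(1)] by (simp add: card_image inj_on_subset)
  also have "\<sigma> ` {j \<in> {..<m}. q (\<sigma> j) < q (\<sigma> i)} = {j. j < m \<and> q j < q (\<sigma> i)}"
  proof -
    have "\<sigma> ` {j \<in> {..<m}. q (\<sigma> j) < q (\<sigma> i)} = {k \<in> \<sigma> ` {..<m}. q k < q (\<sigma> i)}" by auto
    also have "\<sigma> ` {..<m} = {..<m}" using permutes_image[OF assms(1)] .
    finally show ?thesis by auto
  qed
  finally show ?thesis unfolding cntlt_def by simp
qed

lemma pointwise:
  fixes p :: "nat \<Rightarrow> real" and F0 :: "real \<Rightarrow> real"
  assumes N: "N \<subseteq> {..<m}" and inj: "inj_on p {..<m}" and p01: "\<forall>i<m. p i \<in> {0..1}"
    and F0mono: "\<forall>x y. 0 \<le> x \<longrightarrow> x \<le> y \<longrightarrow> y \<le> 1 \<longrightarrow> F0 y \<le> F0 x"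
    and F0nn: "\<forall>x\<in>{0..1}. 0 \<le> F0 x"
    and r: "r1 \<le> r2" "r2 \<le> m"
  shows "(\<Sum>\<sigma>\<in>{\<sigma>. \<sigma> permutes {..<m}}. (\<Prod>i\<in>{..<m}-N. F0 (p (\<sigma> i))) *
            ((\<Sum>i\<in>N. if 0 < r1 \<and> cntlt m (p \<circ> \<sigma>) i < r1 then 1 else 0) / real (max r1 1)))
       \<le> (\<Sum>\<sigma>\<in>{\<sigma>. \<sigma> permutes {..<m}}. (\<Prod>i\<in>{..<m}-N. F0 (p (\<sigma> i))) *
            ((\<Sum>i\<in>N. if 0 < r2 \<and> cntlt m (p \<circ> \<sigma>) i < r2 then 1 else 0) / real (max r2 1)))"
proof -
  let ?I = "{..<m}"
  let ?S = "{\<sigma>. \<sigma> permutes ?I}"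
  have finN: "finite N" using N finite_subset by blast
  define c where "c k = (if k < m then cntlt m p k else k)" for k
  have c_lt: "c k < m" if "k < m" for k using that cntlt_lt by (simp add: c_def)
  have c_strict: "c a < c b" if "a < m" "b < m" "p a < p b" for a b
    using that cntlt_strict by (simp add: c_def)
  have cinj: "inj_on c ?I"
  proof (rule inj_onI)
    fix a b assume ab: "a \<in> ?I" "b \<in> ?I" "c a = c b"
    show "a = b"
    proof (rule ccontr)
      assume "a \<noteq> b"
      hence "p a \<noteq> p b" using inj ab by (auto dest: inj_onD)
      hence "p a < p b \<or> p b < p a" by auto
      thus False using c_strict ab by (metis less_irrefl lessThan_iff)
    qed
  qed
  have cperm: "c permutes ?I"
  proof (rule bij_imp_permutes)
    have "c ` ?I \<subseteq> ?I" using c_lt by auto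
    moreover have "card (c ` ?I) = card ?I" using cinj by (simp add: card_image)
    ultimately have "c ` ?I = ?I" by (intro card_subset_eq) auto
    thus "bij_betw c ?I ?I" using cinj by (simp add: bij_betw_def)
  next
    fix x assume "x \<notin> ?I" thus "c x = x" by (simp add: c_def)
  qed
  define g where "g k = F0 (p (inv c k))" for k
  have g_c: "g (c x) = F0 (p x)" for x
    unfolding g_def using permutes_inverses(2)[OF cperm] by simp
  have gnn: "\<forall>k<m. 0 \<le> g k"
  proof (intro allI impI)
    fix k assume "k < m"
    hence "inv c k < m" using permutes_in_image[OF permutes_inv[OF cperm]] by simp
    thus "0 \<le> g k" using F0nn p01 by (simp add: g_def)
  qed
  have gmono: "\<forall>k l. k \<le> l \<longrightarrow> l < m \<longrightarrow> g l \<le> g k"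
  proof (intro allI impI)
    fix k l assume kl: "k \<le> l" "l < m"
    define a where "a = inv c k"
    define b where "b = inv c l"
    have a: "a < m" "c a = k" using kl permutes_in_image[OF permutes_inv[OF cperm]]
      permutes_inverses(1)[OF cperm] by (auto simp: a_def)
    have b: "b < m" "c b = l" using kl permutes_in_image[OF permutes_inv[OF cperm]]
      permutes_inverses(1)[OF cperm] by (auto simp: b_def)
    have "p a \<le> p b"
    proof (rule ccontr)
      assume "\<not> p a \<le> p b"
      hence "c b < c a" using c_strict[of b a] a b by simp
      thus False using a b kl by simp
    qed
    hence "F0 (p b) \<le> F0 (p a)" using F0mono p01 a b by auto
    thus "g l \<le> g k" using g_c a b by metis
  qed
  define Phi where "Phi r \<tau> = (\<Prod>i\<in>?I-N. g (\<tau> i)) *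
            ((\<Sum>i\<in>N. if 0 < r \<and> \<tau> i < r then 1 else 0) / real (max r 1))" for r and \<tau> :: "nat \<Rightarrow> nat"
  have eqPhi: "(\<Sum>\<sigma>\<in>?S. (\<Prod>i\<in>?I-N. F0 (p (\<sigma> i))) *
            ((\<Sum>i\<in>N. if 0 < r \<and> cntlt m (p \<circ> \<sigma>) i < r then 1 else 0) / real (max r 1)))
        = (\<Sum>\<tau>\<in>?S. Phi r \<tau>)" for r
  proof -
    have "(\<Sum>\<sigma>\<in>?S. (\<Prod>i\<in>?I-N. F0 (p (\<sigma> i))) *
            ((\<Sum>i\<in>N. if 0 < r \<and> cntlt m (p \<circ> \<sigma>) i < r then 1 else 0) / real (max r 1)))
        = (\<Sum>\<sigma>\<in>?S. Phi r (c \<circ> \<sigma>))"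
    proof (rule sum.cong[OF refl])
      fix \<sigma> assume "\<sigma> \<in> ?S"
      hence s: "\<sigma> permutes ?I" by simp
      have 1: "(\<Prod>i\<in>?I-N. F0 (p (\<sigma> i))) = (\<Prod>i\<in>?I-N. g ((c \<circ> \<sigma>) i))"
        by (simp add: g_c)
      have 2: "cntlt m (p \<circ> \<sigma>) i = (c \<circ> \<sigma>) i" if "i \<in> N" for i
      proof -
        have "i < m" using that N by auto
        moreover hence "\<sigma> i < m" using permutes_in_image[OF s] by simp
        ultimately show ?thesis using cntlt_perm[OF s] by (simp add: c_def)
      qed
      show "(\<Prod>i\<in>?I-N. F0 (p (\<sigma> i))) *
            ((\<Sum>i\<in>N. if 0 < r \<and> cntlt m (p \<circ> \<sigma>) i < r then 1 else 0) / real (max r 1)) = Phi r (c \<circ> \<sigma>)"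
        unfolding Phi_def 1 using 2 by (simp cong: sum.cong)
    qed
    also have "\<dots> = (\<Sum>\<tau>\<in>?S. Phi r \<tau>)"
      by (rule setum_permutations_compose_left[OF cperm, symmetric])
    finally show ?thesis .
  qed
  have Phi_pos: "(\<Sum>\<tau>\<in>?S. Phi r \<tau>) =
     (\<Sum>\<tau>\<in>?S. real (card {i\<in>N. \<tau> i < r}) * (\<Prod>i\<in>?I-N. g (\<tau> i))) / r" if "1 \<le> r" for r
  proof -
    have "(\<Sum>i\<in>N. if 0 < r \<and> \<tau> i < r then 1 else 0) = real (card {i\<in>N. \<tau> i < r})" for \<tau> :: "nat \<Rightarrow> nat"
      using that finN by (simp add: sum.If_cases Int_def)
    thus ?thesis using that unfolding Phi_def
      by (simp add: sum_divide_distrib max_def mult.commute)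
  qed
  have Phi0: "(\<Sum>\<tau>\<in>?S. Phi 0 \<tau>) = 0" by (simp add: Phi_def)
  have Pnn: "0 \<le> (\<Sum>\<tau>\<in>?S. Phi r \<tau>)" for r
  proof (rule sum_nonneg)
    fix \<tau> assume "\<tau> \<in> ?S"
    hence "\<forall>i\<in>?I-N. \<tau> i < m" using permutes_in_image by fastforce
    hence "0 \<le> (\<Prod>i\<in>?I-N. g (\<tau> i))" using gnn by (intro prod_nonneg) auto
    thus "0 \<le> Phi r \<tau>" unfolding Phi_def by (intro mult_nonneg_nonneg divide_nonneg_nonneg sum_nonneg) auto
  qed
  show ?thesis unfolding eqPhi
  proof (cases "r1 = 0")
    case True thus "(\<Sum>\<tau>\<in>?S. Phi r1 \<tau>) \<le> (\<Sum>\<tau>\<in>?S. Phi r2 \<tau>)" using Phi0 Pnn by simp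
  next
    case False
    hence "1 \<le> r1" by simp
    thus "(\<Sum>\<tau>\<in>?S. Phi r1 \<tau>) \<le> (\<Sum>\<tau>\<in>?S. Phi r2 \<tau>)"
      using Phi_pos[of r1] Phi_pos[of r2] perm_avg_mono[OF N gnn gmono \<open>1 \<le> r1\<close> r] r by simp
  qed
qed



lemma PiM_density_prob:
  fixes G :: "'i \<Rightarrow> 'a \<Rightarrow> ennreal"
  assumes I: "finite I" and M: "prob_space M"
    and P: "\<And>i. prob_space (density M (G i))"
    and Gm: "\<And>i. G i \<in> borel_measurable M"
  shows "PiM I (\<lambda>i. density M (G i)) = density (PiM I (\<lambda>_. M)) (\<lambda>p. \<Prod>i\<in>I. G i (p i))"
proof -
  interpret L: product_sigma_finite "\<lambda>i. density M (G i)"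
    by (intro product_sigma_finite.intro prob_space_imp_sigma_finite P)
  interpret U: product_sigma_finite "\<lambda>_. M"
    by (intro product_sigma_finite.intro prob_space_imp_sigma_finite M)
  note Gm[measurable]
  have Wm: "(\<lambda>p. \<Prod>i\<in>I. G i (p i)) \<in> borel_measurable (PiM I (\<lambda>_. M))"
    by measurable
  show ?thesis
  proof (rule L.PiM_eqI[symmetric, OF I])
    show "sets (density (PiM I (\<lambda>_. M)) (\<lambda>p. \<Prod>i\<in>I. G i (p i))) = sets (PiM I (\<lambda>i. density M (G i)))"
      unfolding sets_density by (intro sets_PiM_cong) simp_all
  next
    fix A assume A: "\<And>i. i \<in> I \<Longrightarrow> A i \<in> sets (density M (G i))"
    have Am: "A i \<in> sets M" if "i \<in> I" for i using A[OF that] by simp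
    have "emeasure (density (PiM I (\<lambda>_. M)) (\<lambda>p. \<Prod>i\<in>I. G i (p i))) (PiE I A)
        = (\<integral>\<^sup>+ p. (\<Prod>i\<in>I. G i (p i)) * indicator (PiE I A) p \<partial>PiM I (\<lambda>_. M))"
      using Am I Wm by (intro emeasure_density) (auto intro!: sets_PiM_I_finite)
    also have "\<dots> = (\<integral>\<^sup>+ p. (\<Prod>i\<in>I. G i (p i) * indicator (A i) (p i)) \<partial>PiM I (\<lambda>_. M))"
    proof (rule nn_integral_cong)
      fix p assume "p \<in> space (PiM I (\<lambda>_. M))"
      hence "p \<in> extensional I" by (auto simp: space_PiM PiE_def)
      have "indicator (PiE I A) p = (\<Prod>i\<in>I. indicator (A i) (p i) :: ennreal)"
      proof (cases "\<forall>i\<in>I. p i \<in> A i")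
        case True
        hence "p \<in> PiE I A" using \<open>p \<in> extensional I\<close> by (simp add: PiE_def)
        thus ?thesis using True by simp
      next
        case False
        then obtain i where i: "i \<in> I" "p i \<notin> A i" by blast
        hence "p \<notin> PiE I A" by (auto simp: PiE_def)
        moreover have "(\<Prod>i\<in>I. indicator (A i) (p i) :: ennreal) = 0"
          using i I by (intro prod_zero) (auto intro!: bexI[of _ i])
        ultimately show ?thesis by simp
      qed
      thus "(\<Prod>i\<in>I. G i (p i)) * indicator (PiE I A) p = (\<Prod>i\<in>I. G i (p i) * indicator (A i) (p i))"
        by (simp add: prod.distrib)
    qed
    also have "\<dots> = (\<Prod>i\<in>I. \<integral>\<^sup>+ x. G i x * indicator (A i) x \<partial>M)"
      using Am Gm by (intro U.product_nn_integral_prod[OF I]) auto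
    also have "\<dots> = (\<Prod>i\<in>I. emeasure (density M (G i)) (A i))"
      using Am Gm by (intro prod.cong refl emeasure_density[symmetric]) auto
    finally show "emeasure (density (PiM I (\<lambda>_. M)) (\<lambda>p. \<Prod>i\<in>I. G i (p i))) (PiE I A) =
        (\<Prod>i\<in>I. emeasure (density M (G i)) (A i))" .
  qed
qed



lemma AE_distinct_pair:
  fixes M :: "real measure"
  assumes M: "prob_space M" and sp: "space M = UNIV" and sM: "sets M = sets borel"
    and single: "\<And>a. emeasure M {a} = 0"
    and I: "finite I" "i \<in> I" "j \<in> I" "i \<noteq> j"
  shows "AE p in PiM I (\<lambda>_. M). p i \<noteq> p j"
proof -
  interpret U: product_sigma_finite "\<lambda>_. M"
    by (intro product_sigma_finite.intro prob_space_imp_sigma_finite M)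
  let ?P = "PiM I (\<lambda>_. M)"
  let ?E = "{p\<in>space ?P. p i = p j}"
  have mi[measurable]: "(\<lambda>p. p i) \<in> borel_measurable ?P"
    using I(2) measurable_component_singleton[of i I "\<lambda>_. M"] measurable_cong_sets[OF refl sM] by blast
  have mj[measurable]: "(\<lambda>p. p j) \<in> borel_measurable ?P"
    using I(3) measurable_component_singleton[of j I "\<lambda>_. M"] measurable_cong_sets[OF refl sM] by blast
  have Es: "?E \<in> sets ?P" by measurable
  have Ii: "I = insert i (I - {i})" using I by auto
  have "emeasure ?P ?E = (\<integral>\<^sup>+ p. indicator ?E p \<partial>?P)"
    using Es by simp
  also have "\<dots> = (\<integral>\<^sup>+ p. indicator ?E p \<partial>PiM (insert i (I - {i})) (\<lambda>_. M))"
    using Ii by simp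
  also have "\<dots> = (\<integral>\<^sup>+ x. (\<integral>\<^sup>+ y. indicator ?E (x(i := y)) \<partial>M) \<partial>PiM (I - {i}) (\<lambda>_. M))"
    by (rule U.product_nn_integral_insert) (use I Es Ii in \<open>auto\<close>)
  also have "\<dots> = (\<integral>\<^sup>+ x. 0 \<partial>PiM (I - {i}) (\<lambda>_. M))"
  proof (rule nn_integral_cong)
    fix x assume x: "x \<in> space (PiM (I - {i}) (\<lambda>_. M))"
    have "(\<integral>\<^sup>+ y. indicator ?E (x(i := y)) \<partial>M) = (\<integral>\<^sup>+ y. indicator {x j} y \<partial>M)"
    proof (rule nn_integral_cong)
      fix y
      have "x(i := y) \<in> space ?P"
        using x sp Ii by (auto simp: space_PiM PiE_def extensional_def)
      thus "indicator ?E (x(i := y)) = (indicator {x j} y :: ennreal)"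
        using I by (auto simp: indicator_def)
    qed
    also have "\<dots> = 0" using single sM by simp
    finally show "(\<integral>\<^sup>+ y. indicator ?E (x(i := y)) \<partial>M) = 0" .
  qed
  also have "\<dots> = 0" by simp
  finally have "emeasure ?P ?E = 0" .
  thus ?thesis using Es by (subst AE_iff_measurable[of ?E]) auto
qed



definition U01 :: "real measure" where "U01 = density lborel (\<lambda>x. indicator {0..1} x)"

lemma U01_sets[simp, measurable_cong]: "sets U01 = sets borel" by (simp add: U01_def)
lemma U01_space[simp]: "space U01 = UNIV" by (simp add: U01_def)

lemma U01_prob: "prob_space U01"
proof (rule prob_spaceI)
  show "emeasure U01 (space U01) = 1"
    unfolding U01_def by (subst emeasure_density) (auto simp: nn_integral_indicator)
qed

lemma U01_single: "emeasure U01 {a} = 0"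
proof -
  have "emeasure U01 {a} = (\<integral>\<^sup>+ x. indicator {0..1} x * indicator {a} x \<partial>lborel)"
    unfolding U01_def by (subst emeasure_density) auto
  also have "\<dots> \<le> (\<integral>\<^sup>+ x. indicator {a} x \<partial>lborel)"
    by (intro nn_integral_mono) (auto simp: indicator_def)
  also have "\<dots> = 0" by simp
  finally show ?thesis by simp
qed

lemma U01_AE01: "AE x in U01. x \<in> {0..1}"
  unfolding U01_def by (subst AE_density) (auto simp: indicator_def)

definition f0 :: "(real \<Rightarrow> real) \<Rightarrow> real \<Rightarrow> real" where
  "f0 f x = indicator {0..1} x * f x"

lemma f0_meas: "continuous_on {0..1} f \<Longrightarrow> f0 f \<in> borel_measurable borel"
  using borel_measurable_continuous_on_indicator[of "{0..1::real}" f]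
  unfolding f0_def[abs_def] by simp

lemma f0_bounds:
  assumes "\<forall>x\<in>{0..1}. 0 \<le> f x" "\<forall>x y. 0 \<le> x \<longrightarrow> x \<le> y \<longrightarrow> y \<le> 1 \<longrightarrow> f y \<le> f x"
  shows "0 \<le> f0 f x" "f0 f x \<le> f 0"
  using assms by (auto simp: f0_def indicator_def)

lemma f0_mono:
  assumes "\<forall>x y. 0 \<le> x \<longrightarrow> x \<le> y \<longrightarrow> y \<le> 1 \<longrightarrow> f y \<le> f x"
  shows "\<forall>x y. 0 \<le> x \<longrightarrow> x \<le> y \<longrightarrow> y \<le> 1 \<longrightarrow> f0 f y \<le> f0 f x"
  using assms by (auto simp: f0_def indicator_def)

lemma pval_law_eq:
  assumes nn: "\<forall>x\<in>{0..1}. 0 \<le> f x" and c: "continuous_on {0..1} f"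
  shows "pval_law N f i = density U01 (\<lambda>x. ennreal (if i \<in> N then 1 else f0 f x))"
proof (cases "i \<in> N")
  case True
  thus ?thesis by (simp add: pval_law_def U01_def density_1)
next
  case False
  note f0_meas[OF c, measurable]
  have "density U01 (\<lambda>x. ennreal (f0 f x)) = density lborel (\<lambda>x. indicator {0..1} x * ennreal (f0 f x))"
    unfolding U01_def by (rule density_density_eq) auto
  also have "(\<lambda>x. indicator {0..1} x * ennreal (f0 f x)) = (\<lambda>x. ennreal (f x) * indicator {0..1} x)"
    by (auto simp: f0_def indicator_def)
  finally show ?thesis using False by (simp add: pval_law_def)
qed

lemma pval_law_prob:
  assumes nn: "\<forall>x\<in>{0..1}. 0 \<le> f x" and c: "continuous_on {0..1} f"
    and dens: "(\<integral>\<^sup>+ x. ennreal (f x) * indicator {0..1} x \<partial>lborel) = 1"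
  shows "prob_space (pval_law N f i)"
proof (cases "i \<in> N")
  case True
  thus ?thesis using U01_prob by (simp add: pval_law_def U01_def)
next
  case False
  note f0_meas[OF c, measurable]
  show ?thesis
  proof (rule prob_spaceI)
    have "emeasure (pval_law N f i) (space (pval_law N f i)) = emeasure (density U01 (\<lambda>x. ennreal (f0 f x))) UNIV"
      using False by (simp add: pval_law_eq[OF nn c])
    also have "\<dots> = (\<integral>\<^sup>+ x. ennreal (f0 f x) \<partial>U01)"
      by (subst emeasure_density) auto
    also have "\<dots> = (\<integral>\<^sup>+ x. indicator {0..1} x * ennreal (f0 f x) \<partial>lborel)"
      unfolding U01_def by (subst nn_integral_density) auto
    also have "(\<lambda>x. indicator {0..1} x * ennreal (f0 f x)) = (\<lambda>x. ennreal (f x) * indicator {0..1} x)"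
      by (auto simp: f0_def indicator_def)
    finally show "emeasure (pval_law N f i) (space (pval_law N f i)) = 1" using dens by simp
  qed
qed



lemma comp_meas: "i \<in> I \<Longrightarrow> (\<lambda>p. p i) \<in> borel_measurable (PiM I (\<lambda>_. U01))"
  using measurable_component_singleton[of i I "\<lambda>_. U01"] measurable_cong_sets[OF refl U01_sets] by blast

lemma cnt_meas:
  assumes "i < m"
  shows "(\<lambda>p. real (cntlt m p i)) \<in> borel_measurable (PiM {..<m} (\<lambda>_. U01))"
proof -
  have "(\<lambda>p. real (cntlt m p i)) = (\<lambda>p. \<Sum>j<m. if p j < p i then 1 else 0)"
  proof
    fix p :: "nat \<Rightarrow> real"
    have "{j. j < m \<and> p j < p i} = {..<m} \<inter> {j. p j < p i}" by auto
    thus "real (cntlt m p i) = (\<Sum>j<m. if p j < p i then 1 else 0)"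
      unfolding cntlt_def by (simp add: sum.If_cases)
  qed
  also have "\<dots> \<in> borel_measurable (PiM {..<m} (\<lambda>_. U01))"
  proof (intro borel_measurable_sum)
    fix j assume "j \<in> {..<m}"
    show "(\<lambda>p. if p j < p i then 1 else 0 :: real) \<in> borel_measurable (PiM {..<m} (\<lambda>_. U01))"
      using \<open>j \<in> {..<m}\<close> assms
      by (intro measurable_If measurable_const borel_measurable_less comp_meas) auto
  qed
  finally show ?thesis .
qed

definition FDP' :: "nat \<Rightarrow> nat set \<Rightarrow> ((nat \<Rightarrow> real) \<Rightarrow> nat) \<Rightarrow> (nat \<Rightarrow> real) \<Rightarrow> real" where
  "FDP' m N R p = (\<Sum>i\<in>N. if 0 < R p \<and> cntlt m p i < R p then 1 else 0) / real (max (R p) 1)"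

lemma FDP_eq:
  assumes B: "threshold_procedure m R" and N: "N \<subseteq> {..<m}"
  shows "FDP m N R p = FDP' m N R p"
proof -
  have Rm: "R p \<le> m" using B unfolding threshold_procedure_def by blast
  have finN: "finite N" using N finite_subset by blast
  have "rejected m R p \<inter> N = {i\<in>N. 0 < R p \<and> cntlt m p i < R p}"
  proof (cases "0 < R p")
    case True
    have "(p i \<le> sorted_pvals m p ! (R p - 1)) = (cntlt m p i < R p)" for i
      unfolding cntlt_def using rej_char[where r="R p" and m=m and p=p and y="p i"] True Rm by simp
    thus ?thesis using N True by (auto simp: rejected_def)
  next
    case False thus ?thesis by (auto simp: rejected_def)
  qed
  hence "real (num_false_rej m N R p) = (\<Sum>i\<in>N. if 0 < R p \<and> cntlt m p i < R p then 1 else 0)"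
    unfolding num_false_rej_def using finN by (simp add: sum.If_cases Int_def)
  thus ?thesis unfolding FDP_def FDP'_def by simp
qed

lemma FDP'_meas:
  assumes N: "N \<subseteq> {..<m}" and R: "R \<in> PiM {..<m} (\<lambda>_. U01) \<rightarrow>\<^sub>M count_space UNIV"
  shows "FDP' m N R \<in> borel_measurable (PiM {..<m} (\<lambda>_. U01))"
proof -
  let ?P = "PiM {..<m} (\<lambda>_. U01)"
  have c1: "(\<lambda>n::nat. real n) \<in> borel_measurable (count_space UNIV)" by simp
  have c2: "(\<lambda>n::nat. real (max n 1)) \<in> borel_measurable (count_space UNIV)" by simp
  have Rr: "(\<lambda>p. real (R p)) \<in> borel_measurable ?P"
    using measurable_compose[OF R c1] by simp
  have Rr1: "(\<lambda>p. real (max (R p) 1)) \<in> borel_measurable ?P"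
    using measurable_compose[OF R c2] by simp
  have "FDP' m N R = (\<lambda>p. (\<Sum>i\<in>N. if 0 < real (R p) \<and> real (cntlt m p i) < real (R p) then 1 else 0) / real (max (R p) 1))"
    unfolding FDP'_def by simp
  also have "\<dots> \<in> borel_measurable ?P"
  proof (intro borel_measurable_divide borel_measurable_sum Rr1)
    fix i assume "i \<in> N"
    hence "i < m" using N by auto
    note cm = cnt_meas[OF this]
    have "{p \<in> space ?P. 0 < real (R p) \<and> real (cntlt m p i) < real (R p)}
       = {p \<in> space ?P. (\<lambda>_. 0) p < real (R p)} \<inter> {p \<in> space ?P. real (cntlt m p i) < real (R p)}" by auto
    also have "\<dots> \<in> sets ?P"
      by (intro sets.Int borel_measurable_less cm Rr measurable_const) simp
    finally show "(\<lambda>p. if 0 < real (R p) \<and> real (cntlt m p i) < real (R p) then 1 else 0 :: real) \<in> borel_measurable ?P"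
      by (intro measurable_If measurable_const) simp_all
  qed
  finally show ?thesis .
qed



lemma T_meas:
  assumes s: "\<sigma> permutes I"
  shows "(\<lambda>\<omega>. \<lambda>n\<in>I. \<omega> (\<sigma> n)) \<in> PiM I (\<lambda>_. U01) \<rightarrow>\<^sub>M PiM I (\<lambda>_. U01)"
proof -
  have into: "\<sigma> \<in> I \<rightarrow> I" using permutes_in_image[OF s] by auto
  show ?thesis
    using into by (intro measurable_restrict measurable_component_singleton) auto
qed

lemma wt_split: "finite I \<Longrightarrow> (\<Prod>i\<in>I. if i \<in> N then 1 else g i) = (\<Prod>i\<in>I-N. g i :: real)"
  by (simp add: prod.If_cases Diff_eq)

lemma perm_inv_integral:
  fixes h :: "(nat \<Rightarrow> real) \<Rightarrow> real"
  assumes s: "\<sigma> permutes I" and h: "h \<in> borel_measurable (PiM I (\<lambda>_. U01))"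
  shows "integral\<^sup>L (PiM I (\<lambda>_. U01)) h = integral\<^sup>L (PiM I (\<lambda>_. U01)) (\<lambda>p. h (\<lambda>n\<in>I. p (\<sigma> n)))"
proof -
  have inj: "inj_on \<sigma> I" using permutes_inj_on[OF s] .
  have into: "\<sigma> \<in> I \<rightarrow> I" using permutes_in_image[OF s] by auto
  have d: "distr (PiM I (\<lambda>_. U01)) (PiM I (\<lambda>_. U01)) (\<lambda>\<omega>. \<lambda>n\<in>I. \<omega> (\<sigma> n)) = PiM I (\<lambda>_. U01)"
    by (rule distr_PiM_reindex[of I "\<lambda>_. U01" \<sigma> I, OF U01_prob inj into])
  have T: "(\<lambda>\<omega>. \<lambda>n\<in>I. \<omega> (\<sigma> n)) \<in> PiM I (\<lambda>_. U01) \<rightarrow>\<^sub>M PiM I (\<lambda>_. U01)"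
    using into by (intro measurable_restrict measurable_component_singleton) auto
  have "integral\<^sup>L (distr (PiM I (\<lambda>_. U01)) (PiM I (\<lambda>_. U01)) (\<lambda>\<omega>. \<lambda>n\<in>I. \<omega> (\<sigma> n))) h
      = integral\<^sup>L (PiM I (\<lambda>_. U01)) (\<lambda>p. h (\<lambda>n\<in>I. p (\<sigma> n)))"
    by (rule integral_distr[OF T h])
  thus ?thesis by (simp only: d)
qed



theorem theorem2:
  fixes m :: nat and N :: "nat set" and f :: "real \<Rightarrow> real"
    and R1 R2 :: "(nat \<Rightarrow> real) \<Rightarrow> nat"
  assumes N: "N \<subseteq> {..<m}"
    and f_nonneg: "\<forall>x\<in>{0..1}. 0 \<le> f x"
    and f_density: "(\<integral>\<^sup>+ x. ennreal (f x) * indicator {0..1} x \<partial>lborel) = 1"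
    and f_mono: "\<forall>x y. 0 \<le> x \<longrightarrow> x \<le> y \<longrightarrow> y \<le> 1 \<longrightarrow> f y \<le> f x"
    and f_diff: "f differentiable_on {0..1}"
    and B1: "threshold_procedure m R1"
    and B2: "threshold_procedure m R2"
    and R1_meas: "R1 \<in> pvals_law m N f \<rightarrow>\<^sub>M count_space UNIV"
    and R2_meas: "R2 \<in> pvals_law m N f \<rightarrow>\<^sub>M count_space UNIV"
    and R_le: "\<forall>p. R1 p \<le> R2 p"
  shows "FDR m N f R1 \<le> FDR m N f R2"
proof -
  let ?I = "{..<m}"
  define P where "P = PiM ?I (\<lambda>_. U01)"
  have fc: "continuous_on {0..1} f" using f_diff by (rule differentiable_imp_continuous_on)
  note f0m = f0_meas[OF fc]
  have f0b: "0 \<le> f0 f x" "f0 f x \<le> f 0" for x using f0_bounds[OF f_nonneg f_mono] by auto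
  define wt where "wt p = (\<Prod>i\<in>?I. if i \<in> N then 1 else f0 f (p i))" for p :: "nat \<Rightarrow> real"
  have Pprob: "prob_space P" unfolding P_def by (intro prob_space_PiM U01_prob)
  interpret P: prob_space P by (rule Pprob)
  have wt_nn: "0 \<le> wt p" for p unfolding wt_def using f0b by (intro prod_nonneg) auto
  define B where "B = max 1 (f 0)"
  have wt_le: "wt p \<le> B ^ m" for p
  proof -
    have "wt p \<le> (\<Prod>i\<in>?I. B)" unfolding wt_def using f0b
      by (intro prod_mono) (auto simp: B_def intro: order_trans[OF _ max.cobounded2])
    thus ?thesis by simp
  qed
  have wt_meas: "wt \<in> borel_measurable P"
    unfolding wt_def[abs_def]
  proof (intro borel_measurable_prod)
    fix i assume i: "i \<in> ?I"
    show "(\<lambda>p. if i \<in> N then 1 else f0 f (p i)) \<in> borel_measurable P"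
    proof (cases "i \<in> N")
      case True thus ?thesis by simp
    next
      case False
      thus ?thesis using measurable_compose[OF comp_meas[OF i] f0m] by (simp add: P_def)
    qed
  qed
  define G where "G i x = ennreal (if i \<in> N then 1 else f0 f x)" for i x
  have Gprob: "prob_space (density U01 (G i))" for i
    using pval_law_prob[OF f_nonneg fc f_density, of N i]
    unfolding pval_law_eq[OF f_nonneg fc] G_def .
  have Gm: "G i \<in> borel_measurable U01" for i
  proof (cases "i \<in> N")
    case True
    hence "G i = (\<lambda>x. 1)" by (simp add: G_def fun_eq_iff)
    thus ?thesis by simp
  next
    case False
    hence e: "G i = (\<lambda>x. ennreal (f0 f x))" by (simp add: G_def fun_eq_iff)
    have "(\<lambda>x. ennreal (f0 f x)) \<in> borel_measurable borel" using f0m by measurable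
    thus ?thesis unfolding e using measurable_cong_sets[OF U01_sets refl] by simp
  qed
  have law: "pvals_law m N f = density P (\<lambda>p. ennreal (wt p))"
  proof -
    have "pvals_law m N f = PiM ?I (\<lambda>i. density U01 (G i))"
      unfolding pvals_law_def G_def by (rule PiM_cong) (auto simp: pval_law_eq[OF f_nonneg fc])
    also have "\<dots> = density P (\<lambda>p. \<Prod>i\<in>?I. G i (p i))"
      unfolding P_def by (rule PiM_density_prob[OF _ U01_prob Gprob Gm]) simp
    also have "(\<lambda>p. \<Prod>i\<in>?I. G i (p i)) = (\<lambda>p. ennreal (wt p))"
      unfolding wt_def G_def using f0b by (intro ext prod_ennreal) auto
    finally show ?thesis .
  qed
  have sP: "sets (pvals_law m N f) = sets P" by (simp add: law)
  have mc: "(pvals_law m N f \<rightarrow>\<^sub>M (count_space UNIV :: nat measure)) = (P \<rightarrow>\<^sub>M count_space UNIV)"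
    by (rule measurable_cong_sets[OF sP refl])
  have Rm1: "R1 \<in> P \<rightarrow>\<^sub>M count_space UNIV"
    using R1_meas unfolding mc .
  have Rm2: "R2 \<in> P \<rightarrow>\<^sub>M count_space UNIV"
    using R2_meas unfolding mc .
  define H where "H R = (\<lambda>p. wt p * FDP' m N R p)" for R
  have FDR_eq: "FDR m N f R = integral\<^sup>L P (H R)"
    if B: "threshold_procedure m R" and Rm: "R \<in> P \<rightarrow>\<^sub>M count_space UNIV" for R
  proof -
    have e: "FDP m N R = FDP' m N R" using FDP_eq[OF B N] by (intro ext)
    have "FDR m N f R = integral\<^sup>L (density P (\<lambda>p. ennreal (wt p))) (FDP' m N R)"
      unfolding FDR_def law e ..
    also have "\<dots> = integral\<^sup>L P (\<lambda>p. wt p *\<^sub>R FDP' m N R p)"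
      by (rule integral_density) (use FDP'_meas[OF N Rm[unfolded P_def]] wt_meas wt_nn in \<open>auto simp: P_def\<close>)
    finally show ?thesis by (simp add: H_def)
  qed
  have finN: "finite N" using N finite_subset by blast
  have FDP'_bnd: "0 \<le> FDP' m N R p \<and> FDP' m N R p \<le> real (card N)" for R p
  proof -
    have s0: "0 \<le> (\<Sum>i\<in>N. if 0 < R p \<and> cntlt m p i < R p then 1 else 0 :: real)"
      by (intro sum_nonneg) auto
    have s1: "(\<Sum>i\<in>N. if 0 < R p \<and> cntlt m p i < R p then 1 else 0 :: real) \<le> (\<Sum>i\<in>N. 1)"
      by (intro sum_mono) auto
    have d: "1 \<le> real (max (R p) 1)" by simp
    have "FDP' m N R p \<le> (\<Sum>i\<in>N. if 0 < R p \<and> cntlt m p i < R p then 1 else 0 :: real)"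
      unfolding FDP'_def using divide_left_mono[OF d s0] d by simp
    thus ?thesis using s0 s1 d unfolding FDP'_def by simp
  qed
  have H_bnd: "\<bar>H R p\<bar> \<le> B ^ m * real (card N)" for R p
  proof -
    have "0 \<le> H R p" unfolding H_def using wt_nn FDP'_bnd by simp
    moreover have "H R p \<le> B ^ m * real (card N)"
      unfolding H_def using wt_nn wt_le FDP'_bnd order_trans[OF wt_nn wt_le] by (intro mult_mono) auto
    ultimately show ?thesis by simp
  qed
  have H_meas: "H R \<in> borel_measurable P" if Rm: "R \<in> P \<rightarrow>\<^sub>M count_space UNIV" for R
    unfolding H_def
    using wt_meas FDP'_meas[OF N Rm[unfolded P_def]] by (simp add: P_def)
  define S where "S = {\<sigma>. \<sigma> permutes ?I}"
  define T where "T \<sigma> p = (\<lambda>n\<in>?I. p (\<sigma> n))" for \<sigma> and p :: "nat \<Rightarrow> real"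
  have finS: "finite S" unfolding S_def by (rule finite_permutations) simp
  have cardS: "0 < card S" unfolding S_def by (simp add: card_permutations)
  have HT_int: "integrable P (\<lambda>p. H R (T \<sigma> p))"
    if Rm: "R \<in> P \<rightarrow>\<^sub>M count_space UNIV" and s: "\<sigma> \<in> S" for R \<sigma>
  proof (rule P.integrable_const_bound[where B="B ^ m * real (card N)"])
    show "AE x in P. norm (H R (T \<sigma> x)) \<le> B ^ m * real (card N)" using H_bnd by simp
    show "(\<lambda>p. H R (T \<sigma> p)) \<in> borel_measurable P"
    proof -
      have sp: "\<sigma> permutes ?I" using s by (simp add: S_def)
      show ?thesis
        using measurable_compose[OF T_meas[OF sp] H_meas[OF Rm, unfolded P_def]]
        unfolding T_def P_def by simp
    qed
  qed
  have avg: "integral\<^sup>L P (H R) = integral\<^sup>L P (\<lambda>p. \<Sum>\<sigma>\<in>S. H R (T \<sigma> p)) / real (card S)"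
    if Rm: "R \<in> P \<rightarrow>\<^sub>M count_space UNIV" for R
  proof -
    have "integral\<^sup>L P (\<lambda>p. \<Sum>\<sigma>\<in>S. H R (T \<sigma> p)) = (\<Sum>\<sigma>\<in>S. integral\<^sup>L P (\<lambda>p. H R (T \<sigma> p)))"
      using HT_int[OF Rm] by (simp add: integral_sum)
    also have "\<dots> = (\<Sum>\<sigma>\<in>S. integral\<^sup>L P (H R))"
    proof (rule sum.cong[OF refl])
      fix \<sigma> assume "\<sigma> \<in> S"
      hence s: "\<sigma> permutes ?I" by (simp add: S_def)
      show "integral\<^sup>L P (\<lambda>p. H R (T \<sigma> p)) = integral\<^sup>L P (H R)"
        using perm_inv_integral[OF s H_meas[OF Rm, unfolded P_def]] unfolding T_def P_def by simp
    qed
    also have "\<dots> = real (card S) * integral\<^sup>L P (H R)" by simp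
    finally show ?thesis using cardS by simp
  qed
  have ae01: "AE p in P. \<forall>i\<in>?I. p i \<in> {0..1}"
    unfolding P_def
    by (intro AE_finite_allI finite_lessThan AE_PiM_component[of ?I "\<lambda>_. U01"] U01_prob U01_AE01) auto
  have aeinj: "AE p in P. \<forall>i\<in>?I. \<forall>j\<in>?I. i \<noteq> j \<longrightarrow> p i \<noteq> p j"
  proof (intro AE_finite_allI finite_lessThan)
    fix i j assume ij: "i \<in> ?I" "j \<in> ?I"
    show "AE p in P. i \<noteq> j \<longrightarrow> p i \<noteq> p j"
    proof (cases "i = j")
      case True thus ?thesis by simp
    next
      case False
      show ?thesis
        using AE_distinct_pair[OF U01_prob U01_space U01_sets U01_single finite_lessThan ij False]
        unfolding P_def by simp
    qed
  qed
  have ptw: "AE p in P. (\<Sum>\<sigma>\<in>S. H R1 (T \<sigma> p)) \<le> (\<Sum>\<sigma>\<in>S. H R2 (T \<sigma> p))"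
    using AE_space ae01 aeinj
  proof eventually_elim
    case (elim p)
    have ext: "p \<in> extensional ?I" using elim(1) by (auto simp: P_def space_PiM PiE_def)
    have Tp: "T \<sigma> p = p \<circ> \<sigma>" if "\<sigma> \<in> S" for \<sigma>
    proof
      fix n
      have s: "\<sigma> permutes ?I" using that by (simp add: S_def)
      show "T \<sigma> p n = (p \<circ> \<sigma>) n"
      proof (cases "n \<in> ?I")
        case True thus ?thesis by (simp add: T_def)
      next
        case False
        hence "\<sigma> n = n" using permutes_not_in[OF s] by simp
        thus ?thesis using False ext by (simp add: T_def extensional_def)
      qed
    qed
    have Rperm: "R (p \<circ> \<sigma>) = R p" if "threshold_procedure m R" "\<sigma> \<in> S" for R \<sigma>
      using that sorted_pvals_perm[of \<sigma> m p] unfolding threshold_procedure_def S_def by blast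
    have Heq: "H R (T \<sigma> p) = (\<Prod>i\<in>?I-N. f0 f (p (\<sigma> i))) *
        ((\<Sum>i\<in>N. if 0 < R p \<and> cntlt m (p \<circ> \<sigma>) i < R p then 1 else 0) / real (max (R p) 1))"
      if "threshold_procedure m R" "\<sigma> \<in> S" for R \<sigma>
      unfolding Tp[OF that(2)] H_def FDP'_def wt_def Rperm[OF that] by (simp add: wt_split)
    have e1: "(\<Sum>\<sigma>\<in>S. H R1 (T \<sigma> p)) = (\<Sum>\<sigma>\<in>S. (\<Prod>i\<in>?I-N. f0 f (p (\<sigma> i))) *
        ((\<Sum>i\<in>N. if 0 < R1 p \<and> cntlt m (p \<circ> \<sigma>) i < R1 p then 1 else 0) / real (max (R1 p) 1)))"
      by (rule sum.cong[OF refl]) (rule Heq[OF B1])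
    have e2: "(\<Sum>\<sigma>\<in>S. H R2 (T \<sigma> p)) = (\<Sum>\<sigma>\<in>S. (\<Prod>i\<in>?I-N. f0 f (p (\<sigma> i))) *
        ((\<Sum>i\<in>N. if 0 < R2 p \<and> cntlt m (p \<circ> \<sigma>) i < R2 p then 1 else 0) / real (max (R2 p) 1)))"
      by (rule sum.cong[OF refl]) (rule Heq[OF B2])
    have inj: "inj_on p ?I" using elim(3) by (auto intro!: inj_onI)
    have p01: "\<forall>i<m. p i \<in> {0..1}" using elim(2) by auto
    have F0nn: "\<forall>x\<in>{0..1}. 0 \<le> f0 f x" using f0b by auto
    have r2m: "R2 p \<le> m" using B2 unfolding threshold_procedure_def by blast
    have "(\<Sum>\<sigma>\<in>S. H R1 (T \<sigma> p)) \<le> (\<Sum>\<sigma>\<in>S. H R2 (T \<sigma> p))"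
      unfolding e1 e2 unfolding S_def
      by (rule pointwise[OF N inj p01 f0_mono[OF f_mono] F0nn]) (use R_le r2m in auto)
    thus ?case by simp
  qed
  have "FDR m N f R1 = integral\<^sup>L P (\<lambda>p. \<Sum>\<sigma>\<in>S. H R1 (T \<sigma> p)) / real (card S)"
    using FDR_eq[OF B1 Rm1] avg[OF Rm1] by simp
  also have "\<dots> \<le> integral\<^sup>L P (\<lambda>p. \<Sum>\<sigma>\<in>S. H R2 (T \<sigma> p)) / real (card S)"
  proof (intro divide_right_mono integral_mono_AE ptw)
    show "integrable P (\<lambda>p. \<Sum>\<sigma>\<in>S. H R1 (T \<sigma> p))" using HT_int[OF Rm1] by auto
    show "integrable P (\<lambda>p. \<Sum>\<sigma>\<in>S. H R2 (T \<sigma> p))" using HT_int[OF Rm2] by auto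
  qed simp
  also have "\<dots> = FDR m N f R2"
    using FDR_eq[OF B2 Rm2] avg[OF Rm2] by simp
  finally show ?thesis .
qed

end
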